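(* The Iterated Relaxation Procedure (described in the context) returns a set $M'\in\mathcal I$ such that for every $v\in V$, $$\sum_{e\in\delta_{M'}(v)\setminus L(v)}d_{v,e}\le b_v,$$ where $\delta_{M'}(v)=\delta(v)\cap M'$ and $L(v)$ denotes a set of $\min\{k,|\delta_{M'}(v)|\}$ edges $e\in\delta_{M'}(v)$ with greatest demand $d_{v,e}$.
   Context: Setting: a hypergraph $G=(V,E)$ with every hyperedge having at most $k$ endpoints, capacities $b_v\ge0$, demands $d_{v,e}\ge0$ for each hyperedge $e$ and endpoint $v\in e$, profits $p_e\ge0$, and a matroid $\mathcal M=(E,\mathcal I)$ given by an independence oracle; $\delta(v)$ is the set of hyperedges containing $v$. For $W\subseteq V$, $F\subseteq E$, a matroid $\mathcal M'$ on ground set $F$ with rank function $r_{\mathcal M'}$, and values $b'_v$ ($v\in W$), let $LP[W,F,\mathcal M',b']$ be $\max\{\sum_{e\in F}p_ex_e: \sum_{e\in\delta_F(v)}d_{v,e}x_e\le b'_v\ \forall v\in W,\ x(A)\le r_{\mathcal M'}(A)\ \forall A\subseteq F,\ x\ge0\}$, where $\delta_F(v)=\delta(v)\cap F$ and $x(A)=\sum_{e\in A}x_e$. $\mathcal M'-e$ denotes deletion and $\mathcal M'/e$ contraction. Iterated Relaxation Procedure: start with $W=V$, $F=E$, $\mathcal M'=\mathcal M$, $b'_v=b_v$, $M'=\emptyset$. While $F\neq\emptyset$: compute an optimal extreme point $x^*$ of $LP[W,F,\mathcal M',b']$; if $x^*_e=0$ for some $e\in F$, set $F\leftarrow F-\{e\}$,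 $\mathcal M'\leftarrow\mathcal M'-e$; else if $x^*_e=1$ for some $e\in F$, set $F\leftarrow F-\{e\}$, $\mathcal M'\leftarrow\mathcal M'/e$, $M'\leftarrow M'\cup\{e\}$ and $b'_v\leftarrow b'_v-d_{v,e}$ for each endpoint $v$ of $e$; otherwise remove from $W$ a vertex $v\in W$ minimizing $|\delta_F(v)|-x^*(\delta_F(v))$. Return $M'$. *)

theory Defs
  imports Complex_Main
begin

definition matroid :: "'e set \<Rightarrow> ('e set \<Rightarrow> bool) \<Rightarrow> bool" where
  "matroid G indep \<longleftrightarrow>
     finite G \<and>
     (\<forall>I. indep I \<longrightarrow> I \<subseteq> G) \<and>
     indep {} \<and>
     (\<forall>I J. indep J \<and> I \<subseteq> J \<longrightarrow> indep I) \<and>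
     (\<forall>I J. indep I \<and> indep J \<and> card I < card J \<longrightarrow> (\<exists>e\<in>J - I. indep (insert e I)))"

definition mrank :: "('e set \<Rightarrow> bool) \<Rightarrow> 'e set \<Rightarrow> nat" where
  "mrank indep A = Max (card ` {I. I \<subseteq> A \<and> indep I})"

definition mdel :: "('e set \<Rightarrow> bool) \<Rightarrow> 'e \<Rightarrow> ('e set \<Rightarrow> bool)" where
  "mdel indep e = (\<lambda>I. indep I \<and> e \<notin> I)"

definition mcontr :: "('e set \<Rightarrow> bool) \<Rightarrow> 'e \<Rightarrow> ('e set \<Rightarrow> bool)" where
  "mcontr indep e = (\<lambda>I. e \<notin> I \<and> (if indep {e} then indep (insert e I) else indep I))"

definition hdelta :: "('e \<Rightarrow> 'v set) \<Rightarrow> 'e set \<Rightarrow> 'v \<Rightarrow> 'e set" where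
  "hdelta ends F v = {e \<in> F. v \<in> ends e}"

text \<open>Points are functions on the edge type that vanish outside F (i.e. vectors in R^F).\<close>
definition lp_feasible ::
  "('e \<Rightarrow> 'v set) \<Rightarrow> ('v \<Rightarrow> 'e \<Rightarrow> real) \<Rightarrow> 'v set \<Rightarrow> 'e set \<Rightarrow> ('e set \<Rightarrow> bool)
   \<Rightarrow> ('v \<Rightarrow> real) \<Rightarrow> ('e \<Rightarrow> real) \<Rightarrow> bool" where
  "lp_feasible ends d W F indep b' x \<longleftrightarrow>
     (\<forall>e. e \<notin> F \<longrightarrow> x e = 0) \<and>
     (\<forall>e\<in>F. 0 \<le> x e) \<and>
     (\<forall>v\<in>W. (\<Sum>e\<in>hdelta ends F v. d v e * x e) \<le> b' v) \<and>
     (\<forall>A. A \<subseteq> F \<longrightarrow> sum x A \<le> real (mrank indep A))"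

definition lp_extreme ::
  "('e \<Rightarrow> 'v set) \<Rightarrow> ('v \<Rightarrow> 'e \<Rightarrow> real) \<Rightarrow> 'v set \<Rightarrow> 'e set \<Rightarrow> ('e set \<Rightarrow> bool)
   \<Rightarrow> ('v \<Rightarrow> real) \<Rightarrow> ('e \<Rightarrow> real) \<Rightarrow> bool" where
  "lp_extreme ends d W F indep b' x \<longleftrightarrow>
     lp_feasible ends d W F indep b' x \<and>
     \<not> (\<exists>y z t. lp_feasible ends d W F indep b' y \<and> lp_feasible ends d W F indep b' z \<and>
              y \<noteq> z \<and> 0 < t \<and> t < 1 \<and> x = (\<lambda>e. t * y e + (1 - t) * z e))"

definition lp_opt_extreme ::
  "('e \<Rightarrow> 'v set) \<Rightarrow> ('v \<Rightarrow> 'e \<Rightarrow> real) \<Rightarrow> ('e \<Rightarrow> real) \<Rightarrow> 'v set \<Rightarrow> 'e set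
   \<Rightarrow> ('e set \<Rightarrow> bool) \<Rightarrow> ('v \<Rightarrow> real) \<Rightarrow> ('e \<Rightarrow> real) \<Rightarrow> bool" where
  "lp_opt_extreme ends d p W F indep b' x \<longleftrightarrow>
     lp_extreme ends d W F indep b' x \<and>
     (\<forall>y. lp_feasible ends d W F indep b' y \<longrightarrow>
          (\<Sum>e\<in>F. p e * y e) \<le> (\<Sum>e\<in>F. p e * x e))"

text \<open>State: (W, F, M' (independence predicate), b', current solution set M').\<close>
type_synonym ('v, 'e) irp_state =
  "'v set \<times> 'e set \<times> ('e set \<Rightarrow> bool) \<times> ('v \<Rightarrow> real) \<times> 'e set"

text \<open>One iteration of the while loop (nondeterministic in the choice of the optimal
  extreme point, the edge and the minimizing vertex).\<close>
definition irp_step ::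
  "('e \<Rightarrow> 'v set) \<Rightarrow> ('v \<Rightarrow> 'e \<Rightarrow> real) \<Rightarrow> ('e \<Rightarrow> real)
   \<Rightarrow> ('v, 'e) irp_state \<Rightarrow> ('v, 'e) irp_state \<Rightarrow> bool" where
  "irp_step ends d p s s' \<longleftrightarrow>
    (case s of (W, F, indep, b', M) \<Rightarrow>
      F \<noteq> {} \<and>
      (\<exists>x. lp_opt_extreme ends d p W F indep b' x \<and>
        ((\<exists>e\<in>F. x e = 0 \<and> s' = (W, F - {e}, mdel indep e, b', M))
         \<or> ((\<forall>e\<in>F. x e \<noteq> 0) \<and>
            (\<exists>e\<in>F. x e = 1 \<and>
               s' = (W, F - {e}, mcontr indep e,
                     (\<lambda>v. if v \<in> ends e then b' v - d v e else b' v), insert e M)))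
         \<or> ((\<forall>e\<in>F. x e \<noteq> 0 \<and> x e \<noteq> 1) \<and>
            (\<exists>v\<in>W. (\<forall>u\<in>W. real (card (hdelta ends F v)) - sum x (hdelta ends F v)
                              \<le> real (card (hdelta ends F u)) - sum x (hdelta ends F u)) \<and>
                    s' = (W - {v}, F, indep, b', M))))))"

end

theory Submission
  imports Defs
begin


context
  fixes G :: "'e set" and ind :: "'e set \<Rightarrow> bool"
  assumes mat: "matroid G ind"
begin

lemma m_fin: "finite G" using mat by (simp add: matroid_def)
lemma m_sub: "ind I \<Longrightarrow> I \<subseteq> G" using mat by (simp add: matroid_def)
lemma m_empty: "ind {}" using mat by (simp add: matroid_def)
lemma m_down: "ind J \<Longrightarrow> I \<subseteq> J \<Longrightarrow> ind I" using mat unfolding matroid_def by blast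
lemma m_exch: "ind I \<Longrightarrow> ind J \<Longrightarrow> card I < card J \<Longrightarrow> \<exists>e\<in>J - I. ind (insert e I)"
  using mat unfolding matroid_def by blast
lemma m_finI: "ind I \<Longrightarrow> finite I" using m_sub m_fin finite_subset by blast

lemma m_set_fin: "finite {I. I \<subseteq> A \<and> ind I}"
proof -
  have "{I. I \<subseteq> A \<and> ind I} \<subseteq> Pow G" using m_sub by auto
  then show ?thesis using m_fin finite_subset by blast
qed

lemma rank_ge: "I \<subseteq> A \<Longrightarrow> ind I \<Longrightarrow> card I \<le> mrank ind A"
  unfolding mrank_def using m_set_fin by (intro Max_ge) auto

lemma rank_obtain: "\<exists>I. I \<subseteq> A \<and> ind I \<and> card I = mrank ind A"
proof -
  have "mrank ind A \<in> card ` {I. I \<subseteq> A \<and> ind I}"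
    unfolding mrank_def using m_set_fin m_empty by (intro Max_in) auto
  then show ?thesis by auto
qed

lemma rank_extend_aux:
  "\<forall>I. ind I \<and> I \<subseteq> A \<and> mrank ind A - card I = n \<longrightarrow>
     (\<exists>J. I \<subseteq> J \<and> J \<subseteq> A \<and> ind J \<and> card J = mrank ind A)"
proof (induction n)
  case 0
  then show ?case using rank_ge by (metis diff_is_0_eq le_antisym order_refl)
next
  case (Suc n)
  show ?case
  proof (intro allI impI)
    fix I assume h: "ind I \<and> I \<subseteq> A \<and> mrank ind A - card I = Suc n"
    obtain K where K: "K \<subseteq> A" "ind K" "card K = mrank ind A" using rank_obtain by blast
    have "card I < card K" using h K by linarith
    then obtain e where e: "e \<in> K - I" "ind (insert e I)" using m_exch h K by blast
    have fi: "finite I" using h m_finI by blast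
    have "card (insert e I) = card I + 1" using e fi by simp
    then have "ind (insert e I) \<and> insert e I \<subseteq> A \<and> mrank ind A - card (insert e I) = n"
      using h e K by auto
    then obtain J where "insert e I \<subseteq> J \<and> J \<subseteq> A \<and> ind J \<and> card J = mrank ind A"
      using Suc.IH by blast
    then show "\<exists>J. I \<subseteq> J \<and> J \<subseteq> A \<and> ind J \<and> card J = mrank ind A" by blast
  qed
qed

lemma rank_extend: "ind I \<Longrightarrow> I \<subseteq> A \<Longrightarrow> \<exists>J. I \<subseteq> J \<and> J \<subseteq> A \<and> ind J \<and> card J = mrank ind A"
  using rank_extend_aux by blast

lemma rank_submod: "mrank ind (A \<union> B) + mrank ind (A \<inter> B) \<le> mrank ind A + mrank ind B"
proof -
  obtain I where I: "I \<subseteq> A \<inter> B" "ind I" "card I = mrank ind (A \<inter> B)" using rank_obtain by blast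
  obtain J where J: "I \<subseteq> J" "J \<subseteq> A \<union> B" "ind J" "card J = mrank ind (A \<union> B)"
    using rank_extend[of I "A \<union> B"] I by blast
  have fJ: "finite J" using J m_finI by blast
  have a: "card (J \<inter> A) \<le> mrank ind A" using J m_down by (intro rank_ge) auto
  have b: "card (J \<inter> B) \<le> mrank ind B" using J m_down by (intro rank_ge) auto
  have c: "card (J \<inter> (A \<inter> B)) \<le> mrank ind (A \<inter> B)" using J m_down by (intro rank_ge) auto
  have c2: "card I \<le> card (J \<inter> (A \<inter> B))" using I J fJ by (intro card_mono) auto
  have e0: "card (J \<inter> A) + card (J \<inter> B) = card ((J \<inter> A) \<union> (J \<inter> B)) + card ((J \<inter> A) \<inter> (J \<inter> B))"
    using fJ by (intro card_Un_Int) auto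
  have e1: "(J \<inter> A) \<union> (J \<inter> B) = J" using J by auto
  have e2: "(J \<inter> A) \<inter> (J \<inter> B) = J \<inter> (A \<inter> B)" by auto
  have "card (J \<inter> A) + card (J \<inter> B) = card J + card (J \<inter> (A \<inter> B))" using e0 unfolding e1 e2 .
  then show ?thesis using a b c c2 I J by linarith
qed

lemma rank_single_le: "mrank ind {e} \<le> 1"
proof -
  obtain I where "I \<subseteq> {e}" "card I = mrank ind {e}" using rank_obtain by blast
  then have "card I \<le> card {e}" by (intro card_mono) auto
  then show ?thesis using \<open>card I = mrank ind {e}\<close> by simp
qed

lemma rank_loop: "\<not> ind {e} \<Longrightarrow> mrank ind {e} = 0"
proof -
  assume "\<not> ind {e}"
  obtain I where "I \<subseteq> {e}" "ind I" "card I = mrank ind {e}" using rank_obtain by blast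
  then have "I = {}" using \<open>\<not> ind {e}\<close> subset_singletonD by fastforce
  then show ?thesis using \<open>card I = mrank ind {e}\<close> by simp
qed

end

lemma matroid_contr_set:
  assumes mat: "matroid E indep" and iM: "indep M" and FM: "F \<inter> M = {}" and FE: "F \<subseteq> E"
  shows "matroid F (\<lambda>I. I \<subseteq> F \<and> indep (I \<union> M))"
proof -
  have fE: "finite E" using mat m_fin by blast
  have fM: "finite M" using m_finI[OF mat iM] .
  have fF: "finite F" using fE FE finite_subset by blast
  have ex: "\<exists>e\<in>J - I. insert e I \<subseteq> F \<and> indep (insert e I \<union> M)"
    if h: "(I \<subseteq> F \<and> indep (I \<union> M))" "(J \<subseteq> F \<and> indep (J \<union> M))" "card I < card J" for I J
  proof -
    have fI: "finite I" "finite J" using h fF finite_subset by blast+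
    have "card (I \<union> M) = card I + card M" using h FM fI fM by (intro card_Un_disjoint) auto
    moreover have "card (J \<union> M) = card J + card M" using h FM fI fM by (intro card_Un_disjoint) auto
    ultimately have "card (I \<union> M) < card (J \<union> M)" using h by linarith
    then obtain e where e: "e \<in> (J \<union> M) - (I \<union> M)" "indep (insert e (I \<union> M))"
      using m_exch[OF mat, of "I \<union> M" "J \<union> M"] h by blast
    have e1: "e \<in> J - I" using e(1) by blast
    have e2: "insert e I \<subseteq> F" using e1 h(2) h(1) by blast
    have e3: "insert e I \<union> M = insert e (I \<union> M)" by blast
    show ?thesis apply (rule bexI[of _ e]) apply (rule conjI) apply (rule e2) apply (subst e3) apply (rule e(2)) apply (rule e1) done
  qed
  have dn: "I \<subseteq> F \<and> indep (I \<union> M)" if "J \<subseteq> F \<and> indep (J \<union> M)" "I \<subseteq> J" for I J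
    using that m_down[OF mat, of "J \<union> M" "I \<union> M"] by auto
  show ?thesis unfolding matroid_def
    apply (intro conjI)
    subgoal using fF .
    subgoal by blast
    subgoal using iM by simp
    subgoal using iM by simp
    subgoal apply (intro allI impI) apply (erule conjE) apply (erule (1) dn) done
    subgoal apply (intro allI impI) apply (elim conjE) apply (rule ex) apply (intro conjI; assumption) apply (intro conjI; assumption) apply assumption done
    done
qed


lemma lin_solve_aux:
  "\<forall>Q F. finite F \<and> finite Q \<and> card Q \<le> n \<and> n < card F \<longrightarrow>
     (\<exists>y::'e \<Rightarrow> real. (\<forall>e. e \<notin> F \<longrightarrow> y e = 0) \<and> (\<exists>e\<in>F. y e \<noteq> 0) \<and>
        (\<forall>c\<in>Q. (\<Sum>e\<in>F. c e * y e) = 0))"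
proof (induction n)
  case 0
  show ?case
  proof (intro allI impI)
    fix Q :: "('e \<Rightarrow> real) set" and F :: "'e set"
    assume h: "finite F \<and> finite Q \<and> card Q \<le> 0 \<and> 0 < card F"
    then have Q0: "Q = {}" by auto
    from h obtain e0 where e0: "e0 \<in> F" by (metis card_gt_0_iff ex_in_conv)
    define y :: "'e \<Rightarrow> real" where "y = (\<lambda>e. if e = e0 then 1 else 0)"
    have "\<forall>e. e \<notin> F \<longrightarrow> y e = 0" using e0 unfolding y_def by auto
    moreover have "\<exists>e\<in>F. y e \<noteq> 0" using e0 unfolding y_def by auto
    ultimately show "\<exists>y::'e \<Rightarrow> real. (\<forall>e. e \<notin> F \<longrightarrow> y e = 0) \<and> (\<exists>e\<in>F. y e \<noteq> 0) \<and>
        (\<forall>c\<in>Q. (\<Sum>e\<in>F. c e * y e) = 0)" using Q0 by blast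
  qed
next
  case (Suc n)
  show ?case
  proof (intro allI impI)
    fix Q :: "('e \<Rightarrow> real) set" and F :: "'e set"
    assume h: "finite F \<and> finite Q \<and> card Q \<le> Suc n \<and> Suc n < card F"
    show "\<exists>y::'e \<Rightarrow> real. (\<forall>e. e \<notin> F \<longrightarrow> y e = 0) \<and> (\<exists>e\<in>F. y e \<noteq> 0) \<and>
        (\<forall>c\<in>Q. (\<Sum>e\<in>F. c e * y e) = 0)"
    proof (cases "card Q \<le> n")
      case True
      have "finite F \<and> finite Q \<and> card Q \<le> n \<and> n < card F" using True h by auto
      then show ?thesis using Suc.IH by blast
    next
      case False
      then have cQ: "card Q = Suc n" using h by simp
      then obtain c Q0 where cQ0: "Q = insert c Q0" "c \<notin> Q0" "card Q0 = n"
        using card_Suc_eq[of Q n] by auto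
      have fQ0: "finite Q0" using h cQ0 by auto
      show ?thesis
      proof (cases "\<forall>e\<in>F. c e = 0")
        case True
        obtain y where y: "(\<forall>e. e \<notin> F \<longrightarrow> y e = 0)" "(\<exists>e\<in>F. y e \<noteq> 0)"
            "(\<forall>q\<in>Q0. (\<Sum>e\<in>F. q e * y e) = 0)"
          using Suc.IH[rule_format, of F Q0] h cQ0 fQ0 by auto
        have "(\<Sum>e\<in>F. c e * y e) = 0" using True by simp
        then show ?thesis using y cQ0 by blast
      next
        case False
        then obtain e0 where e0: "e0 \<in> F" "c e0 \<noteq> 0" by blast
        define pr where "pr = (\<lambda>q::'e \<Rightarrow> real. (\<lambda>e. q e - q e0 * c e / c e0))"
        define F' where "F' = F - {e0}"
        have fF': "finite F'" using h F'_def by simp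
        have cF': "card F' = card F - 1" using e0 h F'_def by simp
        have "card (pr ` Q0) \<le> n" using cQ0 card_image_le[OF fQ0, of pr] by simp
        moreover have "n < card F'" using cF' h by linarith
        moreover have "finite (pr ` Q0)" using fQ0 by simp
        ultimately obtain y' where y': "(\<forall>e. e \<notin> F' \<longrightarrow> y' e = 0)" "(\<exists>e\<in>F'. y' e \<noteq> 0)"
            "(\<forall>q\<in>pr ` Q0. (\<Sum>e\<in>F'. q e * y' e) = 0)"
          using Suc.IH[rule_format, of F' "pr ` Q0"] fF' by auto
        define S where "S = (\<Sum>e\<in>F'. c e * y' e)"
        define y where "y = y'(e0 := - S / c e0)"
        have split: "(\<Sum>e\<in>F. q e * y e) = q e0 * y e0 + (\<Sum>e\<in>F'. q e * y' e)" for q :: "'e \<Rightarrow> real"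
        proof -
          have "(\<Sum>e\<in>F. q e * y e) = q e0 * y e0 + (\<Sum>e\<in>F'. q e * y e)"
            unfolding F'_def using h e0 by (intro sum.remove) auto
          moreover have "(\<Sum>e\<in>F'. q e * y e) = (\<Sum>e\<in>F'. q e * y' e)"
            using F'_def y_def by (intro sum.cong) auto
          ultimately show ?thesis by simp
        qed
        have ye0: "y e0 = - S / c e0" using y_def by simp
        have r1: "\<forall>e. e \<notin> F \<longrightarrow> y e = 0" using y' F'_def y_def e0 by auto
        have r2: "\<exists>e\<in>F. y e \<noteq> 0" using y' F'_def y_def by auto
        have r3: "(\<Sum>e\<in>F. c e * y e) = 0" using split[of c] ye0 e0 S_def by simp
        have r4: "(\<Sum>e\<in>F. q e * y e) = 0" if q: "q \<in> Q0" for q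
        proof -
          have "(\<Sum>e\<in>F'. pr q e * y' e) = 0" using y' q by blast
          moreover have "(\<Sum>e\<in>F'. pr q e * y' e) = (\<Sum>e\<in>F'. q e * y' e) - q e0 / c e0 * S"
            unfolding pr_def S_def
            by (simp add: left_diff_distrib sum_subtractf sum_distrib_left mult.assoc)
          ultimately have "(\<Sum>e\<in>F'. q e * y' e) = q e0 / c e0 * S" by simp
          then show ?thesis using split[of q] ye0 by simp
        qed
        show ?thesis using r1 r2 r3 r4 cQ0 by blast
      qed
    qed
  qed
qed

lemma lin_solve:
  assumes "finite F" "finite Q" "card Q < card F"
  shows "\<exists>y::'e \<Rightarrow> real. (\<forall>e. e \<notin> F \<longrightarrow> y e = 0) \<and> (\<exists>e\<in>F. y e \<noteq> 0) \<and>
        (\<forall>c\<in>Q. (\<Sum>e\<in>F. c e * y e) = 0)"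
  using lin_solve_aux[of "card Q"] assms by blast


lemma fk:
  fixes f w :: "'e \<Rightarrow> real"
  assumes fX: "finite X" and BX: "B \<subseteq> X" and LX: "L \<subseteq> X" and cL: "card L = k"
    and top: "\<forall>e\<in>L. \<forall>e'\<in>X - L. f e' \<le> f e"
    and fnn: "\<forall>e\<in>X. 0 \<le> f e" and w01: "\<forall>e\<in>B. 0 \<le> w e \<and> w e \<le> 1"
    and sw: "sum w B \<le> real k"
  shows "(\<Sum>e\<in>B. f e * w e) \<le> sum f L"
proof (cases "L = {}")
  case True
  have fB: "finite B" using fX BX finite_subset by blast
  have k0: "k = 0" using True cL by simp
  have "\<forall>e\<in>B. w e = 0"
  proof -
    have "sum w B = 0" using sw k0 w01 sum_nonneg[of B w] by auto
    then show ?thesis using sum_nonneg_eq_0_iff[OF fB, of w] w01 by auto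
  qed
  then show ?thesis using True by simp
next
  case False
  have fB: "finite B" using fX BX finite_subset by blast
  have fL: "finite L" using fX LX finite_subset by blast
  define m where "m = Min (f ` L)"
  have mL: "\<forall>e\<in>L. m \<le> f e" using fL m_def by simp
  have mex: "m \<in> f ` L" using fL False m_def by simp
  have m0: "0 \<le> m" using mex LX fnn by auto
  have mXL: "\<forall>e\<in>X - L. f e \<le> m" using mex top by auto
  have s1: "(\<Sum>e\<in>B. f e * w e) = (\<Sum>e\<in>B \<inter> L. f e * w e) + (\<Sum>e\<in>B - L. f e * w e)"
    using fB by (metis Diff_eq sum.Int_Diff)
  have s2: "(\<Sum>e\<in>B - L. f e * w e) \<le> (\<Sum>e\<in>B - L. m * w e)"
    using mXL BX w01 by (intro sum_mono mult_right_mono) auto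
  have s3: "sum w B = sum w (B \<inter> L) + sum w (B - L)"
    using fB by (metis Diff_eq sum.Int_Diff)
  have s4: "(\<Sum>e\<in>B - L. m * w e) = m * sum w (B - L)" by (simp add: sum_distrib_left)
  have s5: "m * sum w (B - L) \<le> m * (real k - sum w (B \<inter> L))"
    using s3 sw m0 by (intro mult_left_mono) auto
  have s6: "sum f L = sum f (L \<inter> B) + sum f (L - B)"
    using fL by (metis Diff_eq sum.Int_Diff)
  have s7: "sum f (L - B) \<ge> (\<Sum>e\<in>L - B. m)" using mL by (intro sum_mono) auto
  have s8: "(\<Sum>e\<in>L - B. m) = m * real (card (L - B))" by simp
  have cLs: "card L = card (L \<inter> B) + card (L - B)"
    using fL by (metis Diff_eq card_Int_Diff)
  have s9: "(\<Sum>e\<in>B \<inter> L. f e * w e - m * w e + m) \<le> (\<Sum>e\<in>B \<inter> L. f e)"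
  proof (intro sum_mono)
    fix e assume e: "e \<in> B \<inter> L"
    have "(f e - m) * (w e - 1) \<le> 0"
      using mL e w01 by (intro mult_nonneg_nonpos) auto
    then show "f e * w e - m * w e + m \<le> f e" by (simp add: algebra_simps)
  qed
  have s10: "(\<Sum>e\<in>B \<inter> L. f e * w e - m * w e + m) =
      (\<Sum>e\<in>B \<inter> L. f e * w e) - m * sum w (B \<inter> L) + m * real (card (B \<inter> L))"
    by (simp add: sum.distrib sum_subtractf sum_distrib_left)
  have BL: "B \<inter> L = L \<inter> B" by blast
  have "real k = real (card (L \<inter> B)) + real (card (L - B))" using cLs cL by simp
  then have s11: "m * real k = m * real (card (L \<inter> B)) + m * real (card (L - B))"
    by (simp add: distrib_left)
  have s12: "m * (real k - sum w (B \<inter> L)) = m * real k - m * sum w (B \<inter> L)"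
    by (simp add: right_diff_distrib)
  show ?thesis
    using s12 s1 s2 s4 s5 s6 s7 s8 s9 s10 s11 unfolding BL by linarith
qed

lemma comb:
  fixes f x :: "'e \<Rightarrow> real"
  assumes fA: "finite A" and fB: "finite B" and AB: "A \<inter> B = {}"
    and fnn: "\<forall>e\<in>A \<union> B. 0 \<le> f e" and x01: "\<forall>e\<in>B. 0 \<le> x e \<and> x e \<le> 1"
    and sx: "(\<Sum>e\<in>B. 1 - x e) \<le> real k"
    and LX: "L \<subseteq> A \<union> B" and cL: "card L = min k (card (A \<union> B))"
    and top: "\<forall>e\<in>L. \<forall>e'\<in>(A \<union> B) - L. f e' \<le> f e"
  shows "sum f ((A \<union> B) - L) \<le> (\<Sum>e\<in>B. f e * x e) + sum f A"
proof -
  have fX: "finite (A \<union> B)" using fA fB by simp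
  have r0: "0 \<le> (\<Sum>e\<in>B. f e * x e) + sum f A"
    using fnn x01 by (intro add_nonneg_nonneg sum_nonneg mult_nonneg_nonneg) auto
  show ?thesis
  proof (cases "card (A \<union> B) \<le> k")
    case True
    then have "card L = card (A \<union> B)" using cL by simp
    then have "L = A \<union> B" using card_subset_eq[OF fX LX] by simp
    then show ?thesis using r0 by simp
  next
    case False
    then have cLk: "card L = k" using cL by simp
    have w: "\<forall>e\<in>B. 0 \<le> 1 - x e \<and> 1 - x e \<le> 1" using x01 by auto
    have key: "(\<Sum>e\<in>B. f e * (1 - x e)) \<le> sum f L"
      using fk[OF fX _ LX cLk top fnn w sx] by simp
    have d1: "sum f ((A \<union> B) - L) = sum f (A \<union> B) - sum f L"
      using fX LX by (simp add: sum_diff)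
    have d2: "sum f (A \<union> B) = sum f A + sum f B" using fA fB AB by (simp add: sum.union_disjoint)
    have d3: "(\<Sum>e\<in>B. f e * (1 - x e)) = sum f B - (\<Sum>e\<in>B. f e * x e)"
      by (simp add: right_diff_distrib sum_subtractf)
    show ?thesis using key d1 d2 d3 by linarith
  qed
qed


lemma chain_max:
  assumes "finite S" "S \<noteq> {}" "\<forall>X\<in>S. \<forall>Y\<in>S. X \<subseteq> Y \<or> Y \<subseteq> X" "\<forall>X\<in>S. finite X"
  shows "\<exists>P\<in>S. \<forall>D\<in>S. D \<subseteq> P"
proof -
  have "Max (card ` S) \<in> card ` S" using assms by (intro Max_in) auto
  then obtain P where P: "P \<in> S" "card P = Max (card ` S)" by auto
  have "D \<subseteq> P" if D: "D \<in> S" for D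
  proof (rule ccontr)
    assume "\<not> D \<subseteq> P"
    then have "P \<subset> D" using assms(3) D P(1) by blast
    then have "card P < card D" using assms(4) D by (intro psubset_card_mono) auto
    moreover have "card D \<le> Max (card ` S)" using assms(1) D by (intro Max_ge) auto
    ultimately show False using P(2) by linarith
  qed
  then show ?thesis using P(1) by blast
qed

lemma chain_lemma:
  fixes y :: "'e \<Rightarrow> real"
  assumes fF: "finite F" and TF: "T \<subseteq> Pow F"
    and cl: "\<forall>A\<in>T. \<forall>B\<in>T. A \<union> B \<in> T \<and> A \<inter> B \<in> T"
    and CT: "C \<subseteq> T" and ch: "\<forall>X\<in>C. \<forall>Y\<in>C. X \<subseteq> Y \<or> Y \<subseteq> X"
    and e: "{} \<in> C"
    and mx: "\<forall>S\<in>T. (\<forall>X\<in>C. X \<subseteq> S \<or> S \<subseteq> X) \<longrightarrow> S \<in> C"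
    and z: "\<forall>X\<in>C. sum y X = 0"
    and A: "A \<in> T"
  shows "sum y A = 0"
proof -
  have "C \<subseteq> Pow F" using CT TF by blast
  moreover have "finite (Pow F)" using fF by simp
  ultimately have finC: "finite C" by (rule finite_subset)
  have finX: "finite X" if "X \<in> T" for X using that TF fF finite_subset by blast
  have AF: "A \<subseteq> F" using A TF by blast
  have part: "\<forall>D\<in>C. card D = n \<longrightarrow> sum y (A \<inter> D) = 0" for n
  proof (induction n rule: less_induct)
    case (less n)
    show ?case
    proof (intro ballI impI)
      fix D assume D: "D \<in> C" and cD: "card D = n"
      show "sum y (A \<inter> D) = 0"
      proof (cases "D = {}")
        case True then show ?thesis by simp
      next
        case False
        define PS where "PS = {X\<in>C. X \<subset> D}"
        have PSne: "PS \<noteq> {}" using False e unfolding PS_def by blast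
        have PSf: "finite PS" using finC unfolding PS_def by simp
        have PSch: "\<forall>X\<in>PS. \<forall>Y\<in>PS. X \<subseteq> Y \<or> Y \<subseteq> X"
          using ch unfolding PS_def by blast
        have PSfin: "\<forall>X\<in>PS. finite X"
        proof
          fix X assume "X \<in> PS"
          then have "X \<in> T" using CT unfolding PS_def by blast
          then show "finite X" using finX by blast
        qed
        obtain P where P: "P \<in> PS" "\<forall>X\<in>PS. X \<subseteq> P"
          using chain_max[OF PSf PSne PSch PSfin] by blast
        have PC: "P \<in> C" and PD: "P \<subset> D" using P(1) unfolding PS_def by auto
        have DT: "D \<in> T" and PT: "P \<in> T" using D PC CT by auto
        define S where "S = (A \<inter> D) \<union> P"
        have "A \<inter> D \<in> T" using cl A DT by blast
        then have ST: "S \<in> T" unfolding S_def using cl PT by blast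
        have Scomp: "\<forall>X\<in>C. X \<subseteq> S \<or> S \<subseteq> X"
        proof
          fix X assume X: "X \<in> C"
          show "X \<subseteq> S \<or> S \<subseteq> X"
          proof (cases "D \<subseteq> X")
            case True then show ?thesis using PD unfolding S_def by blast
          next
            case False
            then have "X \<subset> D" using ch X D by blast
            then have "X \<in> PS" using X unfolding PS_def by blast
            then show ?thesis using P(2) unfolding S_def by blast
          qed
        qed
        have SC: "S \<in> C" using mx ST Scomp by blast
        have fD: "finite D" using DT finX by blast
        have cP: "card P < n" using PD fD cD psubset_card_mono by blast
        have IHP: "sum y (A \<inter> P) = 0" using less.IH[OF cP] PC by blast
        show ?thesis
        proof (cases "S = D")
          case False
          then have "S \<subset> D" unfolding S_def using PD by blast
          then have "S \<in> PS" using SC unfolding PS_def by blast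
          then have "S \<subseteq> P" using P(2) by blast
          then have "A \<inter> D = A \<inter> P" unfolding S_def using PD by blast
          then show ?thesis using IHP by simp
        next
          case True
          have fAD: "finite (A \<inter> D)" using fD by simp
          have s1: "sum y (A \<inter> D) = sum y (A \<inter> D \<inter> P) + sum y (A \<inter> D - P)"
            using fAD by (metis Diff_eq sum.Int_Diff)
          have s2: "A \<inter> D \<inter> P = A \<inter> P" using PD by blast
          have s3: "sum y D = sum y (D \<inter> P) + sum y (D - P)"
            using fD by (metis Diff_eq sum.Int_Diff)
          have s4: "D \<inter> P = P" using PD by blast
          have s5: "D - P = A \<inter> D - P" using True unfolding S_def by blast
          have "sum y D = 0" "sum y P = 0" using z D PC by auto
          then show ?thesis using s1 s2 s3 s4 s5 IHP by simp
        qed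
      qed
    qed
  qed
  have Cne: "C \<noteq> {}" using e by blast
  have Cfin: "\<forall>X\<in>C. finite X" using CT finX by blast
  obtain Tp where Tp: "Tp \<in> C" "\<forall>X\<in>C. X \<subseteq> Tp"
    using chain_max[OF finC Cne ch Cfin] by blast
  have TpT: "Tp \<in> T" using Tp CT by blast
  have "A \<union> Tp \<in> T" using cl A TpT by blast
  moreover have "\<forall>X\<in>C. X \<subseteq> A \<union> Tp \<or> A \<union> Tp \<subseteq> X" using Tp by blast
  ultimately have "A \<union> Tp \<in> C" using mx by blast
  then have "A \<subseteq> Tp" using Tp by blast
  then have "A \<inter> Tp = A" by blast
  then show ?thesis using part Tp(1) by metis
qed



lemma rank_empty: "matroid G ind \<Longrightarrow> mrank ind {} = 0"
proof -
  assume m: "matroid G ind"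
  from rank_obtain[OF m, of "{}"] obtain I where I: "I \<subseteq> {} \<and> ind I \<and> card I = mrank ind {}" ..
  then have "I = {}" by blast
  then show ?thesis using I by simp
qed

lemma count_step:
  fixes x :: "'e \<Rightarrow> real"
  assumes fF: "finite F" and fW: "finite W" and Fne: "F \<noteq> {}"
    and x01: "\<forall>e\<in>F. 0 < x e \<and> x e < 1"
    and ek: "\<forall>e\<in>F. finite (ends e) \<and> card (ends e) \<le> k"
    and H: "\<forall>v\<in>W. real k < real (card (hdelta ends F v)) - sum x (hdelta ends F v)"
  shows "real (card W) < real (card F) - sum x F"
proof -
  have pos: "0 < (\<Sum>e\<in>F. 1 - x e)" using x01 fF Fne by (intro sum_pos) auto
  have cF: "real (card F) - sum x F = (\<Sum>e\<in>F. 1 - x e)" by (simp add: sum_subtractf)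
  show ?thesis
  proof (cases "W = {}")
    case True then show ?thesis using pos cF by simp
  next
    case False
    have cv: "real (card (hdelta ends F v)) - sum x (hdelta ends F v) = (\<Sum>e\<in>hdelta ends F v. 1 - x e)" for v
      by (simp add: sum_subtractf)
    have sw: "(\<Sum>v\<in>W. real k) < (\<Sum>v\<in>W. (\<Sum>e\<in>hdelta ends F v. 1 - x e))"
      using H cv fW False by (intro sum_strict_mono) auto
    have swap: "(\<Sum>v\<in>W. (\<Sum>e\<in>hdelta ends F v. 1 - x e)) = (\<Sum>e\<in>F. (\<Sum>v\<in>{v\<in>W. v \<in> ends e}. 1 - x e))"
      unfolding hdelta_def using sum.swap_restrict[OF fW fF, of "\<lambda>v e. 1 - x e" "\<lambda>v e. v \<in> ends e"] .
    have inner: "(\<Sum>v\<in>{v\<in>W. v \<in> ends e}. 1 - x e) \<le> real k * (1 - x e)" if e: "e \<in> F" for e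
    proof -
      have "card {v\<in>W. v \<in> ends e} \<le> card (ends e)" using ek e by (intro card_mono) auto
      moreover have "card (ends e) \<le> k" using ek e by blast
      ultimately have c: "real (card {v\<in>W. v \<in> ends e}) \<le> real k" by linarith
      have "(\<Sum>v\<in>{v\<in>W. v \<in> ends e}. 1 - x e) = real (card {v\<in>W. v \<in> ends e}) * (1 - x e)" by simp
      also have "\<dots> \<le> real k * (1 - x e)" using c x01 e by (intro mult_right_mono) auto
      finally show ?thesis .
    qed
    have "(\<Sum>e\<in>F. (\<Sum>v\<in>{v\<in>W. v \<in> ends e}. 1 - x e)) \<le> (\<Sum>e\<in>F. real k * (1 - x e))"
      using inner by (intro sum_mono) auto
    also have "\<dots> = real k * (\<Sum>e\<in>F. 1 - x e)" by (simp add: sum_distrib_left)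
    finally have "real k * real (card W) < real k * (\<Sum>e\<in>F. 1 - x e)"
      using sw swap by (simp add: mult.commute)
    then have "real (card W) < (\<Sum>e\<in>F. 1 - x e)"
      using mult_less_cancel_left[of "real k" "real (card W)" "(\<Sum>e\<in>F. 1 - x e)"] by simp
    then show ?thesis using cF by simp
  qed
qed


lemma abs_sum_le_Y:
  fixes y :: "'e \<Rightarrow> real"
  assumes "finite F" "A \<subseteq> F"
  shows "\<bar>sum y A\<bar> \<le> (\<Sum>e\<in>F. \<bar>y e\<bar>)"
proof -
  have "\<bar>sum y A\<bar> \<le> (\<Sum>e\<in>A. \<bar>y e\<bar>)" by (rule sum_abs)
  also have "\<dots> \<le> (\<Sum>e\<in>F. \<bar>y e\<bar>)" using assms by (intro sum_mono2) auto
  finally show ?thesis .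
qed

lemma perturb:
  fixes x y :: "'e \<Rightarrow> real"
  assumes feas: "lp_feasible ends d W F ind b' x" and fF: "finite F"
    and xpos: "\<forall>e\<in>F. 0 < x e"
    and y0: "\<forall>e. e \<notin> F \<longrightarrow> y e = 0" and ynz: "\<exists>e\<in>F. y e \<noteq> 0"
    and yW: "\<forall>v\<in>W. (\<Sum>e\<in>hdelta ends F v. d v e * y e) = 0"
    and yT: "\<forall>A. A \<subseteq> F \<and> sum x A = real (mrank ind A) \<longrightarrow> sum y A = 0"
  shows "\<not> lp_extreme ends d W F ind b' x"
proof -
  have f0: "\<forall>e. e \<notin> F \<longrightarrow> x e = 0" and fW: "\<forall>v\<in>W. (\<Sum>e\<in>hdelta ends F v. d v e * x e) \<le> b' v"
    and fr: "\<forall>A. A \<subseteq> F \<longrightarrow> sum x A \<le> real (mrank ind A)"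
    using feas unfolding lp_feasible_def by simp_all
  define Y where "Y = (\<Sum>e\<in>F. \<bar>y e\<bar>)"
  obtain e1 where e1: "e1 \<in> F" "y e1 \<noteq> 0" using ynz by blast
  have ye: "\<bar>y e\<bar> \<le> Y" if "e \<in> F" for e
    unfolding Y_def using fF that by (intro member_le_sum) auto
  have Ypos: "0 < Y" using ye[OF e1(1)] e1(2) by linarith
  define NT where "NT = {A. A \<subseteq> F \<and> sum x A \<noteq> real (mrank ind A)}"
  define Sl where "Sl = (\<lambda>A. real (mrank ind A) - sum x A) ` NT"
  have fSl: "finite Sl" unfolding Sl_def NT_def using fF by simp
  have Slpos: "\<forall>s\<in>Sl. 0 < s"
  proof
    fix s assume "s \<in> Sl"
    then obtain A where A: "A \<in> NT" "s = real (mrank ind A) - sum x A" unfolding Sl_def by blast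
    then have "A \<subseteq> F" "sum x A \<noteq> real (mrank ind A)" unfolding NT_def by auto
    moreover have "sum x A \<le> real (mrank ind A)" using fr \<open>A \<subseteq> F\<close> by blast
    ultimately show "0 < s" using A(2) by linarith
  qed
  define m1 where "m1 = (if Sl = {} then 1 else Min Sl)"
  have m1pos: "0 < m1" unfolding m1_def using Slpos fSl by auto
  have m1le: "\<forall>s\<in>Sl. m1 \<le> s" unfolding m1_def using fSl by auto
  define m2 where "m2 = Min (x ` F)"
  have m2pos: "0 < m2" unfolding m2_def using xpos fF e1(1) by (subst Min_gr_iff) auto
  have m2le: "\<forall>e\<in>F. m2 \<le> x e" unfolding m2_def using fF by auto
  define eps where "eps = min m1 m2 / (2 * Y)"
  have epspos: "0 < eps" unfolding eps_def using m1pos m2pos Ypos by simp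
  have epsY: "eps * Y = min m1 m2 / 2" unfolding eps_def using Ypos by simp
  have feasT: "lp_feasible ends d W F ind b' (\<lambda>e. x e + t * y e)" if t: "\<bar>t\<bar> \<le> eps" for t
    unfolding lp_feasible_def
  proof (intro conjI allI impI ballI)
    fix e assume "e \<notin> F" then show "x e + t * y e = 0" using f0 y0 by simp
  next
    fix e assume e: "e \<in> F"
    have "\<bar>t * y e\<bar> \<le> eps * Y" unfolding abs_mult using t ye[OF e] by (intro mult_mono) auto
    then have "- (eps * Y) \<le> t * y e" by (simp add: abs_le_iff)
    moreover have "min m1 m2 \<le> m2" by simp
    moreover have "m2 \<le> x e" using m2le e by blast
    ultimately show "0 \<le> x e + t * y e" using epsY m2pos by linarith
  next
    fix v assume v: "v \<in> W"
    have "(\<Sum>e\<in>hdelta ends F v. d v e * (x e + t * y e)) =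
        (\<Sum>e\<in>hdelta ends F v. d v e * x e) + t * (\<Sum>e\<in>hdelta ends F v. d v e * y e)"
      by (simp add: distrib_left sum.distrib sum_distrib_left mult.left_commute)
    then show "(\<Sum>e\<in>hdelta ends F v. d v e * (x e + t * y e)) \<le> b' v" using yW fW v by simp
  next
    fix A assume A: "A \<subseteq> F"
    have sA: "(\<Sum>e\<in>A. x e + t * y e) = sum x A + t * sum y A"
      by (simp add: sum.distrib sum_distrib_left)
    show "(\<Sum>e\<in>A. x e + t * y e) \<le> real (mrank ind A)"
    proof (cases "sum x A = real (mrank ind A)")
      case True
      then show ?thesis using yT A sA by simp
    next
      case False
      then have "A \<in> NT" unfolding NT_def using A by blast
      then have "real (mrank ind A) - sum x A \<in> Sl" unfolding Sl_def by blast
      then have sl: "m1 \<le> real (mrank ind A) - sum x A" using m1le by blast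
      have "\<bar>t * sum y A\<bar> \<le> eps * Y" unfolding abs_mult
        using t abs_sum_le_Y[OF fF A, of y] Y_def by (intro mult_mono) auto
      then have "t * sum y A \<le> eps * Y" by (simp add: abs_le_iff)
      moreover have "min m1 m2 \<le> m1" by simp
      ultimately show ?thesis using sA sl epsY m1pos by linarith
    qed
  qed
  define z1 where "z1 = (\<lambda>e. x e + eps * y e)"
  define z2 where "z2 = (\<lambda>e. x e + (- eps) * y e)"
  have z1f: "lp_feasible ends d W F ind b' z1" unfolding z1_def using feasT epspos by simp
  have z2f: "lp_feasible ends d W F ind b' z2" unfolding z2_def by (rule feasT) (use epspos in simp)
  have neq: "z1 \<noteq> z2"
  proof
    assume "z1 = z2"
    then have "z1 e1 = z2 e1" by simp
    then show False unfolding z1_def z2_def using e1(2) epspos by simp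
  qed
  have xeq: "x = (\<lambda>e. (1/2) * z1 e + (1 - 1/2) * z2 e)"
    unfolding z1_def z2_def by (rule ext) (simp add: algebra_simps)
  show ?thesis unfolding lp_extreme_def
  proof
    assume "lp_feasible ends d W F ind b' x \<and>
      \<not> (\<exists>y z t. lp_feasible ends d W F ind b' y \<and> lp_feasible ends d W F ind b' z \<and>
              y \<noteq> z \<and> 0 < t \<and> t < 1 \<and> x = (\<lambda>e. t * y e + (1 - t) * z e))"
    moreover have "\<exists>y z t. lp_feasible ends d W F ind b' y \<and> lp_feasible ends d W F ind b' z \<and>
              y \<noteq> z \<and> 0 < t \<and> t < 1 \<and> x = (\<lambda>e. t * y e + (1 - t) * z e)"
      apply (rule exI[of _ z1], rule exI[of _ z2], rule exI[of _ "1/2"])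
      using z1f z2f neq xeq by simp
    ultimately show False by blast
  qed
qed


lemma key:
  fixes ends :: "'e \<Rightarrow> 'v set" and d :: "'v \<Rightarrow> 'e \<Rightarrow> real" and x :: "'e \<Rightarrow> real"
  assumes mat: "matroid F ind" and fW: "finite W" and Fne: "F \<noteq> {}"
    and ext: "lp_extreme ends d W F ind b' x"
    and frac: "\<forall>e\<in>F. x e \<noteq> 0 \<and> x e \<noteq> 1"
    and ek: "\<forall>e\<in>F. finite (ends e) \<and> card (ends e) \<le> k"
  shows "\<exists>v\<in>W. real (card (hdelta ends F v)) - sum x (hdelta ends F v) \<le> real k"
proof (rule ccontr)
  assume nt: "\<not> ?thesis"
  have H: "\<forall>v\<in>W. real k < real (card (hdelta ends F v)) - sum x (hdelta ends F v)"
  proof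
    fix v assume "v \<in> W"
    then have "\<not> real (card (hdelta ends F v)) - sum x (hdelta ends F v) \<le> real k" using nt by blast
    then show "real k < real (card (hdelta ends F v)) - sum x (hdelta ends F v)" by linarith
  qed
  have feas: "lp_feasible ends d W F ind b' x" using ext unfolding lp_extreme_def by blast
  have fnn: "\<forall>e\<in>F. 0 \<le> x e" and fr: "\<forall>A. A \<subseteq> F \<longrightarrow> sum x A \<le> real (mrank ind A)"
    using feas unfolding lp_feasible_def by simp_all
  have fF: "finite F" using m_fin[OF mat] .
  have x01: "\<forall>e\<in>F. 0 < x e \<and> x e < 1"
  proof
    fix e assume e: "e \<in> F"
    have "sum x {e} \<le> real (mrank ind {e})" using fr e by blast
    moreover have "mrank ind {e} \<le> 1" using rank_single_le[OF mat] .
    ultimately have "x e \<le> 1" by simp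
    then show "0 < x e \<and> x e < 1" using frac fnn e by force
  qed
  have xpos: "\<forall>e\<in>F. 0 < x e" using x01 by blast
  have cW: "real (card W) < real (card F) - sum x F"
    using count_step[OF fF fW Fne x01 ek H] .
  define T where "T = {A. A \<subseteq> F \<and> sum x A = real (mrank ind A)}"
  have TF: "T \<subseteq> Pow F" unfolding T_def by blast
  have cl: "\<forall>A\<in>T. \<forall>B\<in>T. A \<union> B \<in> T \<and> A \<inter> B \<in> T"
  proof (intro ballI)
    fix A B assume A: "A \<in> T" and B: "B \<in> T"
    have AF: "A \<subseteq> F" and BF: "B \<subseteq> F" using A B unfolding T_def by auto
    have fA: "finite A" using finite_subset[OF AF fF] .
    have fB: "finite B" using finite_subset[OF BF fF] .
    have xA: "sum x A = real (mrank ind A)" and xB: "sum x B = real (mrank ind B)"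
      using A B unfolding T_def by auto
    have u: "sum x (A \<union> B) + sum x (A \<inter> B) = sum x A + sum x B" using sum.union_inter[OF fA fB] .
    have sm: "real (mrank ind (A \<union> B)) + real (mrank ind (A \<inter> B)) \<le> real (mrank ind A) + real (mrank ind B)"
      using rank_submod[OF mat, of A B] by linarith
    have "A \<union> B \<subseteq> F" using AF BF by (rule Un_least)
    then have l1: "sum x (A \<union> B) \<le> real (mrank ind (A \<union> B))" using fr by blast
    have "A \<inter> B \<subseteq> F" using AF by blast
    then have l2: "sum x (A \<inter> B) \<le> real (mrank ind (A \<inter> B))" using fr by blast
    have "sum x (A \<union> B) = real (mrank ind (A \<union> B))" using u sm l1 l2 xA xB by linarith
    moreover have "sum x (A \<inter> B) = real (mrank ind (A \<inter> B))" using u sm l1 l2 xA xB by linarith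
    ultimately show "A \<union> B \<in> T \<and> A \<inter> B \<in> T" unfolding T_def using AF BF by blast
  qed
  have eT: "{} \<in> T" unfolding T_def using rank_empty[OF mat] by simp
  define chs where "chs = {C. C \<subseteq> T \<and> (\<forall>X\<in>C. \<forall>Y\<in>C. X \<subseteq> Y \<or> Y \<subseteq> X)}"
  have fT: "finite T" using finite_subset[OF TF] fF by simp
  have fchs: "finite chs"
  proof -
    have "chs \<subseteq> Pow T" unfolding chs_def by blast
    moreover have "finite (Pow T)" using fT by simp
    ultimately show ?thesis by (rule finite_subset)
  qed
  have chsne: "{} \<in> chs" unfolding chs_def by blast
  have "Max (card ` chs) \<in> card ` chs" using fchs chsne by (intro Max_in) auto
  then obtain C0 where C0: "C0 \<in> chs" "card C0 = Max (card ` chs)" by auto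
  have C0T: "C0 \<subseteq> T" and C0ch: "\<forall>X\<in>C0. \<forall>Y\<in>C0. X \<subseteq> Y \<or> Y \<subseteq> X"
    using C0(1) unfolding chs_def by auto
  have fC0: "finite C0" using C0T fT finite_subset by blast
  have mx: "\<forall>S\<in>T. (\<forall>X\<in>C0. X \<subseteq> S \<or> S \<subseteq> X) \<longrightarrow> S \<in> C0"
  proof (intro ballI impI)
    fix S assume S: "S \<in> T" and comp: "\<forall>X\<in>C0. X \<subseteq> S \<or> S \<subseteq> X"
    show "S \<in> C0"
    proof (rule ccontr)
      assume nS: "S \<notin> C0"
      have "insert S C0 \<in> chs" unfolding chs_def using C0T C0ch S comp by blast
      then have "card (insert S C0) \<le> Max (card ` chs)" using fchs by (intro Max_ge) auto
      moreover have "card (insert S C0) = card C0 + 1" using fC0 nS by simp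
      ultimately show False using C0(2) by linarith
    qed
  qed
  have eC0: "{} \<in> C0" using mx eT by blast
  define C' where "C' = C0 - {{}}"
  have fC': "finite C'" using fC0 C'_def by simp
  have sumlt: "sum x X < sum x Y" if "X \<in> T" "Y \<in> T" "X \<subset> Y" for X Y
  proof -
    have YF: "Y \<subseteq> F" using that(2) TF by blast
    have fY: "finite Y" using YF fF finite_subset by blast
    have s: "sum x Y = sum x X + sum x (Y - X)"
      using sum.subset_diff[OF _ fY, of X x] that(3) by auto
    have "0 < sum x (Y - X)" using xpos YF that(3) fY by (intro sum_pos) auto
    then show ?thesis using s by linarith
  qed
  have inj: "inj_on (mrank ind) C'"
  proof (rule inj_onI)
    fix X Y assume X: "X \<in> C'" and Y: "Y \<in> C'" and r: "mrank ind X = mrank ind Y"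
    have XT: "X \<in> T" and YT: "Y \<in> T" using X Y C0T unfolding C'_def by auto
    have xX: "sum x X = real (mrank ind X)" and xY: "sum x Y = real (mrank ind Y)"
      using XT YT unfolding T_def by auto
    show "X = Y"
    proof (rule ccontr)
      assume "X \<noteq> Y"
      moreover have "X \<subseteq> Y \<or> Y \<subseteq> X" using C0ch X Y unfolding C'_def by blast
      ultimately have "X \<subset> Y \<or> Y \<subset> X" by blast
      then show False using sumlt[OF XT YT] sumlt[OF YT XT] xX xY r by auto
    qed
  qed
  define N where "N = nat \<lfloor>sum x F\<rfloor>"
  have sF0: "0 \<le> sum x F" using fnn by (intro sum_nonneg) auto
  have rng: "mrank ind ` C' \<subseteq> {1..N}"
  proof
    fix r assume "r \<in> mrank ind ` C'"
    then obtain X where X: "X \<in> C'" "r = mrank ind X" by blast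
    have XT: "X \<in> T" and Xne: "X \<noteq> {}" using X C0T unfolding C'_def by auto
    have XF: "X \<subseteq> F" using XT TF by blast
    have xX: "sum x X = real r" using XT X(2) unfolding T_def by auto
    have "0 < sum x X" using sumlt[OF eT XT] Xne by auto
    then have r1: "1 \<le> r" using xX by simp
    have "sum x X \<le> sum x F" using XF fF fnn by (intro sum_mono2) auto
    then have "of_int (int r) \<le> sum x F" using xX by simp
    then have "int r \<le> \<lfloor>sum x F\<rfloor>" by (simp add: le_floor_iff)
    then have "r \<le> N" unfolding N_def by linarith
    then show "r \<in> {1..N}" using r1 by simp
  qed
  have "card C' = card (mrank ind ` C')" using card_image[OF inj] by simp
  also have "\<dots> \<le> card {1..N}" using rng by (intro card_mono) auto
  also have "\<dots> = N" by simp
  finally have cC': "card C' \<le> N" .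
  have "real N \<le> sum x F" unfolding N_def using sF0 by linarith
  then have cC'r: "real (card C') \<le> sum x F" using cC' by linarith
  define Q where "Q = (\<lambda>X e. if e \<in> X then (1::real) else 0) ` C' \<union>
      (\<lambda>v e. if e \<in> hdelta ends F v then d v e else 0) ` W"
  have fQ: "finite Q" unfolding Q_def using fC' fW by simp
  have "card Q \<le> card ((\<lambda>X e. if e \<in> X then (1::real) else 0) ` C') + card ((\<lambda>v e. if e \<in> hdelta ends F v then d v e else 0) ` W)"
    unfolding Q_def by (rule card_Un_le)
  also have "\<dots> \<le> card C' + card W" by (intro add_mono card_image_le fC' fW)
  finally have cQ: "card Q \<le> card C' + card W" .
  have "card Q < card F" using cQ cC'r cW by linarith
  then obtain y :: "'e \<Rightarrow> real" where y0: "\<forall>e. e \<notin> F \<longrightarrow> y e = 0" and ynz: "\<exists>e\<in>F. y e \<noteq> 0"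
      and yQ: "\<forall>c\<in>Q. (\<Sum>e\<in>F. c e * y e) = 0"
    using lin_solve[OF fF fQ] by blast
  have yC: "\<forall>X\<in>C0. sum y X = 0"
  proof
    fix X assume X: "X \<in> C0"
    show "sum y X = 0"
    proof (cases "X = {}")
      case True then show ?thesis by simp
    next
      case False
      then have "X \<in> C'" using X C'_def by blast
      then have "(\<lambda>e. if e \<in> X then (1::real) else 0) \<in> Q" unfolding Q_def by blast
      then have "(\<Sum>e\<in>F. (if e \<in> X then (1::real) else 0) * y e) = 0" using bspec[OF yQ] by simp
      moreover have "(\<Sum>e\<in>F. (if e \<in> X then (1::real) else 0) * y e) = (\<Sum>e\<in>F. if e \<in> X then y e else 0)"
        by (intro sum.cong) auto
      moreover have "sum y (F \<inter> X) = (\<Sum>e\<in>F. if e \<in> X then y e else 0)"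
        using sum.inter_restrict[OF fF, of y X] .
      moreover have "F \<inter> X = X" using X C0T TF by blast
      ultimately show ?thesis by metis
    qed
  qed
  have yW: "\<forall>v\<in>W. (\<Sum>e\<in>hdelta ends F v. d v e * y e) = 0"
  proof
    fix v assume v: "v \<in> W"
    then have "(\<lambda>e. if e \<in> hdelta ends F v then d v e else 0) \<in> Q" unfolding Q_def by blast
    then have "(\<Sum>e\<in>F. (if e \<in> hdelta ends F v then d v e else 0) * y e) = 0" using bspec[OF yQ] by simp
    moreover have "(\<Sum>e\<in>F. (if e \<in> hdelta ends F v then d v e else 0) * y e) =
        (\<Sum>e\<in>F. if e \<in> hdelta ends F v then d v e * y e else 0)"
      by (intro sum.cong) auto
    moreover have "(\<Sum>e\<in>F \<inter> hdelta ends F v. d v e * y e) = (\<Sum>e\<in>F. if e \<in> hdelta ends F v then d v e * y e else 0)"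
      using sum.inter_restrict[OF fF, of "\<lambda>e. d v e * y e" "hdelta ends F v"] .
    moreover have "F \<inter> hdelta ends F v = hdelta ends F v" unfolding hdelta_def by blast
    ultimately show "(\<Sum>e\<in>hdelta ends F v. d v e * y e) = 0" by metis
  qed
  have yT: "\<forall>A. A \<subseteq> F \<and> sum x A = real (mrank ind A) \<longrightarrow> sum y A = 0"
  proof (intro allI impI)
    fix A assume "A \<subseteq> F \<and> sum x A = real (mrank ind A)"
    then have AT: "A \<in> T" unfolding T_def by blast
    show "sum y A = 0" using chain_lemma[OF fF TF cl C0T C0ch eC0 mx yC AT] .
  qed
  have "\<not> lp_extreme ends d W F ind b' x" using perturb[OF feas fF xpos y0 ynz yW yT] .
  then show False using ext by blast
qed


definition goodv :: "('e \<Rightarrow> 'v set) \<Rightarrow> ('v \<Rightarrow> 'e \<Rightarrow> real) \<Rightarrow> nat \<Rightarrow> ('v \<Rightarrow> real) \<Rightarrow> 'v \<Rightarrow> 'e set \<Rightarrow> bool" where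
  "goodv ends d k b v X \<longleftrightarrow> (\<forall>L. L \<subseteq> hdelta ends X v \<and> card L = min k (card (hdelta ends X v)) \<and>
                (\<forall>e\<in>L. \<forall>e'\<in>hdelta ends X v - L. d v e' \<le> d v e)
             \<longrightarrow> (\<Sum>e\<in>hdelta ends X v - L. d v e) \<le> b v)"

definition irp_inv :: "'v set \<Rightarrow> 'e set \<Rightarrow> ('e \<Rightarrow> 'v set) \<Rightarrow> nat \<Rightarrow> ('v \<Rightarrow> real) \<Rightarrow> ('v \<Rightarrow> 'e \<Rightarrow> real)
   \<Rightarrow> ('e set \<Rightarrow> bool) \<Rightarrow> ('v, 'e) irp_state \<Rightarrow> bool" where
  "irp_inv V E ends k b d indep s \<longleftrightarrow> (case s of (W, F, ind, b', M) \<Rightarrow>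
     W \<subseteq> V \<and> F \<subseteq> E \<and> M \<subseteq> E \<and> F \<inter> M = {} \<and> indep M \<and>
     ind = (\<lambda>I. I \<subseteq> F \<and> indep (I \<union> M)) \<and>
     (\<forall>v\<in>W. b' v = b v - (\<Sum>e\<in>hdelta ends M v. d v e) \<and> 0 \<le> b' v) \<and>
     (\<forall>v\<in>V - W. \<forall>N. N \<subseteq> F \<longrightarrow> goodv ends d k b v (M \<union> N)))"

context
  fixes V :: "'v set" and E :: "'e set" and ends :: "'e \<Rightarrow> 'v set" and k :: nat
    and b :: "'v \<Rightarrow> real" and d :: "'v \<Rightarrow> 'e \<Rightarrow> real" and p :: "'e \<Rightarrow> real"
    and indep :: "'e set \<Rightarrow> bool"
  assumes fV: "finite V" and fE: "finite E"
    and eV: "\<forall>e\<in>E. ends e \<subseteq> V \<and> card (ends e) \<le> k"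
    and bnn: "\<forall>v\<in>V. 0 \<le> b v"
    and dnn: "\<forall>e\<in>E. \<forall>v\<in>ends e. 0 \<le> d v e"
    and mat: "matroid E indep"
begin

lemma inv_init: "irp_inv V E ends k b d indep (V, E, indep, b, {})"
  unfolding irp_inv_def
proof (simp only: prod.case, intro conjI)
  show "indep {}" using m_empty[OF mat] .
  show "indep = (\<lambda>I. I \<subseteq> E \<and> indep (I \<union> {}))"
    using m_sub[OF mat] by (intro ext) auto
  show "\<forall>v\<in>V. b v = b v - (\<Sum>e\<in>hdelta ends {} v. d v e) \<and> 0 \<le> b v"
    using bnn unfolding hdelta_def by simp
qed auto

lemma inv_step:
  assumes I: "irp_inv V E ends k b d indep s" and st: "irp_step ends d p s s'"
  shows "irp_inv V E ends k b d indep s'"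
proof -
  obtain W F ind b' M where s: "s = (W, F, ind, b', M)" by (cases s) auto
  have WV: "W \<subseteq> V" and FE: "F \<subseteq> E" and ME: "M \<subseteq> E" and FM: "F \<inter> M = {}" and iM: "indep M"
    and indd: "ind = (\<lambda>I. I \<subseteq> F \<and> indep (I \<union> M))"
    and bW: "\<forall>v\<in>W. b' v = b v - (\<Sum>e\<in>hdelta ends M v. d v e) \<and> 0 \<le> b' v"
    and gd: "\<forall>v\<in>V - W. \<forall>N. N \<subseteq> F \<longrightarrow> goodv ends d k b v (M \<union> N)"
  proof -
    have H: "W \<subseteq> V \<and> F \<subseteq> E \<and> M \<subseteq> E \<and> F \<inter> M = {} \<and> indep M \<and>
     ind = (\<lambda>I. I \<subseteq> F \<and> indep (I \<union> M)) \<and>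
     (\<forall>v\<in>W. b' v = b v - (\<Sum>e\<in>hdelta ends M v. d v e) \<and> 0 \<le> b' v) \<and>
     (\<forall>v\<in>V - W. \<forall>N. N \<subseteq> F \<longrightarrow> goodv ends d k b v (M \<union> N))"
      using I unfolding s irp_inv_def prod.case .
    then show "W \<subseteq> V" "F \<subseteq> E" "M \<subseteq> E" "F \<inter> M = {}" "indep M"
      "ind = (\<lambda>I. I \<subseteq> F \<and> indep (I \<union> M))"
      "\<forall>v\<in>W. b' v = b v - (\<Sum>e\<in>hdelta ends M v. d v e) \<and> 0 \<le> b' v"
      "\<forall>v\<in>V - W. \<forall>N. N \<subseteq> F \<longrightarrow> goodv ends d k b v (M \<union> N)" by blast+
  qed
  have Fne: "F \<noteq> {}" using st unfolding s irp_step_def by simp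
  obtain x where opt: "lp_opt_extreme ends d p W F ind b' x" and
    cases: "(\<exists>e\<in>F. x e = 0 \<and> s' = (W, F - {e}, mdel ind e, b', M))
         \<or> ((\<forall>e\<in>F. x e \<noteq> 0) \<and>
            (\<exists>e\<in>F. x e = 1 \<and>
               s' = (W, F - {e}, mcontr ind e,
                     (\<lambda>v. if v \<in> ends e then b' v - d v e else b' v), insert e M)))
         \<or> ((\<forall>e\<in>F. x e \<noteq> 0 \<and> x e \<noteq> 1) \<and>
            (\<exists>v\<in>W. (\<forall>u\<in>W. real (card (hdelta ends F v)) - sum x (hdelta ends F v)
                              \<le> real (card (hdelta ends F u)) - sum x (hdelta ends F u)) \<and>
                    s' = (W - {v}, F, ind, b', M)))"
    using st unfolding s irp_step_def by auto
  have extr: "lp_extreme ends d W F ind b' x" using opt unfolding lp_opt_extreme_def by blast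
  have feas: "lp_feasible ends d W F ind b' x" using extr unfolding lp_extreme_def by blast
  have fnn: "\<forall>e\<in>F. 0 \<le> x e" and fW: "\<forall>v\<in>W. (\<Sum>e\<in>hdelta ends F v. d v e * x e) \<le> b' v"
    and fr: "\<forall>A. A \<subseteq> F \<longrightarrow> sum x A \<le> real (mrank ind A)"
    using feas unfolding lp_feasible_def by simp_all
  have matF: "matroid F ind" unfolding indd using matroid_contr_set[OF mat iM FM FE] .
  have fF: "finite F" using finite_subset[OF FE fE] .
  have fM: "finite M" using finite_subset[OF ME fE] .
  have xle1: "x e \<le> 1" if e: "e \<in> F" for e
  proof -
    have "sum x {e} \<le> real (mrank ind {e})" using fr e by blast
    moreover have "mrank ind {e} \<le> 1" using rank_single_le[OF matF] .
    ultimately show ?thesis by simp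
  qed
  from cases show ?thesis
  proof (elim disjE conjE bexE)
    fix e assume e: "e \<in> F" and s': "s' = (W, F - {e}, mdel ind e, b', M)"
    have "mdel ind e = (\<lambda>I. I \<subseteq> F - {e} \<and> indep (I \<union> M))"
      unfolding indd mdel_def by (intro ext) auto
    moreover have "\<forall>v\<in>V - W. \<forall>N. N \<subseteq> F - {e} \<longrightarrow> goodv ends d k b v (M \<union> N)"
    proof (intro ballI allI impI)
      fix v N assume "v \<in> V - W" "N \<subseteq> F - {e}"
      moreover then have "N \<subseteq> F" by blast
      ultimately show "goodv ends d k b v (M \<union> N)" using gd by blast
    qed
    moreover have "F - {e} \<subseteq> E" "(F - {e}) \<inter> M = {}" using FE FM by auto
    ultimately show ?thesis unfolding s' irp_inv_def prod.case using WV ME iM bW by blast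
  next
    fix e assume e: "e \<in> F" and x1: "x e = 1"
      and s': "s' = (W, F - {e}, mcontr ind e,
                     (\<lambda>v. if v \<in> ends e then b' v - d v e else b' v), insert e M)"
    have ie: "ind {e}"
    proof (rule ccontr)
      assume "\<not> ind {e}"
      then have "mrank ind {e} = 0" using rank_loop[OF matF] by blast
      moreover have "sum x {e} \<le> real (mrank ind {e})" using fr e by blast
      ultimately show False using x1 by simp
    qed
    have eM: "e \<notin> M" using e FM by blast
    have iM': "indep (insert e M)" using ie unfolding indd by simp
    have mc: "mcontr ind e = (\<lambda>I. I \<subseteq> F - {e} \<and> indep (I \<union> insert e M))"
      unfolding mcontr_def using ie unfolding indd by (intro ext) auto
    have b2: "\<forall>v\<in>W. (if v \<in> ends e then b' v - d v e else b' v) =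
        b v - (\<Sum>e'\<in>hdelta ends (insert e M) v. d v e') \<and> 0 \<le> (if v \<in> ends e then b' v - d v e else b' v)"
    proof
      fix v assume v: "v \<in> W"
      show "(if v \<in> ends e then b' v - d v e else b' v) =
        b v - (\<Sum>e'\<in>hdelta ends (insert e M) v. d v e') \<and> 0 \<le> (if v \<in> ends e then b' v - d v e else b' v)"
      proof (cases "v \<in> ends e")
        case True
        have hd: "hdelta ends (insert e M) v = insert e (hdelta ends M v)"
          unfolding hdelta_def using True by auto
        have fh: "finite (hdelta ends M v)" unfolding hdelta_def using fM by simp
        have eh: "e \<notin> hdelta ends M v" unfolding hdelta_def using eM by simp
        have sm: "(\<Sum>e'\<in>hdelta ends (insert e M) v. d v e') = d v e + (\<Sum>e'\<in>hdelta ends M v. d v e')"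
          unfolding hd using fh eh by simp
        have ehF: "e \<in> hdelta ends F v" unfolding hdelta_def using e True by simp
        have fhF: "finite (hdelta ends F v)" unfolding hdelta_def using fF by simp
        have nn: "\<forall>e'\<in>hdelta ends F v. 0 \<le> d v e' * x e'"
          unfolding hdelta_def using dnn fnn FE by (auto intro!: mult_nonneg_nonneg)
        have "d v e * x e \<le> (\<Sum>e'\<in>hdelta ends F v. d v e' * x e')"
          using member_le_sum[OF ehF, of "\<lambda>e'. d v e' * x e'"] nn fhF by blast
        moreover have "(\<Sum>e'\<in>hdelta ends F v. d v e' * x e') \<le> b' v" using fW v by blast
        ultimately have "d v e \<le> b' v" using x1 by simp
        then show ?thesis using True sm bW v by simp
      next
        case False
        have hd: "hdelta ends (insert e M) v = hdelta ends M v"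
          unfolding hdelta_def using False by auto
        have "b' v = b v - (\<Sum>e'\<in>hdelta ends M v. d v e') \<and> 0 \<le> b' v" using bW v by blast
        then show ?thesis using False hd by simp
      qed
    qed
    have g2: "\<forall>v\<in>V - W. \<forall>N. N \<subseteq> F - {e} \<longrightarrow> goodv ends d k b v (insert e M \<union> N)"
    proof (intro ballI allI impI)
      fix v N assume v: "v \<in> V - W" and N: "N \<subseteq> F - {e}"
      have "insert e N \<subseteq> F" using N e by blast
      then have "goodv ends d k b v (M \<union> insert e N)" using gd v by blast
      moreover have "M \<union> insert e N = insert e M \<union> N" by blast
      ultimately show "goodv ends d k b v (insert e M \<union> N)" by simp
    qed
    have h: "F - {e} \<subseteq> E" "insert e M \<subseteq> E" "(F - {e}) \<inter> insert e M = {}" using FE ME e FM by auto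
    show ?thesis unfolding s' irp_inv_def prod.case using h WV iM' mc b2 g2 by blast
  next
    fix v0 assume frac: "\<forall>e\<in>F. x e \<noteq> 0 \<and> x e \<noteq> 1" and v0: "v0 \<in> W"
      and mn: "\<forall>u\<in>W. real (card (hdelta ends F v0)) - sum x (hdelta ends F v0)
                              \<le> real (card (hdelta ends F u)) - sum x (hdelta ends F u)"
      and s': "s' = (W - {v0}, F, ind, b', M)"
    have fW': "finite W" using finite_subset[OF WV fV] .
    have ek: "\<forall>e\<in>F. finite (ends e) \<and> card (ends e) \<le> k"
      using eV FE fV finite_subset by blast
    obtain u where u: "u \<in> W" "real (card (hdelta ends F u)) - sum x (hdelta ends F u) \<le> real k"
      using key[OF matF fW' Fne extr frac ek] by blast
    have kv0: "real (card (hdelta ends F v0)) - sum x (hdelta ends F v0) \<le> real k"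
      using mn u by fastforce
    have fhF: "finite (hdelta ends F v0)" unfolding hdelta_def using fF by simp
    have kv0': "(\<Sum>e\<in>hdelta ends F v0. 1 - x e) \<le> real k"
      using kv0 by (simp add: sum_subtractf)
    have g0: "goodv ends d k b v0 (M \<union> N)" if N: "N \<subseteq> F" for N
      unfolding goodv_def
    proof (intro allI impI, elim conjE)
      fix L
      define A where "A = hdelta ends M v0"
      define B where "B = hdelta ends N v0"
      assume L1: "L \<subseteq> hdelta ends (M \<union> N) v0" and L2: "card L = min k (card (hdelta ends (M \<union> N) v0))"
        and L3: "\<forall>e\<in>L. \<forall>e'\<in>hdelta ends (M \<union> N) v0 - L. d v0 e' \<le> d v0 e"
      have X: "hdelta ends (M \<union> N) v0 = A \<union> B" unfolding A_def B_def hdelta_def by auto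
      have fA: "finite A" unfolding A_def hdelta_def using fM by simp
      have fN: "finite N" using finite_subset[OF N fF] .
      have fB: "finite B" unfolding B_def hdelta_def using fN by simp
      have AB: "A \<inter> B = {}" unfolding A_def B_def hdelta_def using N FM by auto
      have BF: "B \<subseteq> hdelta ends F v0" unfolding B_def hdelta_def using N by auto
      have dn: "\<forall>e\<in>A \<union> B. 0 \<le> d v0 e"
      proof
        fix e assume "e \<in> A \<union> B"
        then have "e \<in> E" "v0 \<in> ends e" unfolding A_def B_def hdelta_def using ME N FE by auto
        then show "0 \<le> d v0 e" using dnn by blast
      qed
      have x01: "\<forall>e\<in>B. 0 \<le> x e \<and> x e \<le> 1" using BF fnn xle1 unfolding hdelta_def by auto
      have sB: "(\<Sum>e\<in>B. 1 - x e) \<le> real k"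
      proof -
        have "(\<Sum>e\<in>B. 1 - x e) \<le> (\<Sum>e\<in>hdelta ends F v0. 1 - x e)"
          using BF fhF xle1 unfolding hdelta_def by (intro sum_mono2) auto
        then show ?thesis using kv0' by linarith
      qed
      have cmb: "sum (d v0) ((A \<union> B) - L) \<le> (\<Sum>e\<in>B. d v0 e * x e) + sum (d v0) A"
        using comb[OF fA fB AB dn x01 sB, of L] L1 L2 L3 unfolding X by blast
      have s1: "(\<Sum>e\<in>B. d v0 e * x e) \<le> (\<Sum>e\<in>hdelta ends F v0. d v0 e * x e)"
      proof (intro sum_mono2[OF fhF BF])
        fix e assume "e \<in> hdelta ends F v0 - B"
        then have "e \<in> E" "v0 \<in> ends e" "e \<in> F" unfolding hdelta_def using FE by auto
        then show "0 \<le> d v0 e * x e" using dnn fnn by (auto intro!: mult_nonneg_nonneg)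
      qed
      have s2: "(\<Sum>e\<in>hdelta ends F v0. d v0 e * x e) \<le> b' v0" using fW v0 by blast
      have s3: "b' v0 = b v0 - sum (d v0) A" using bW v0 unfolding A_def by simp
      show "(\<Sum>e\<in>hdelta ends (M \<union> N) v0 - L. d v0 e) \<le> b v0"
        unfolding X using cmb s1 s2 s3 by simp
    qed
    have g3: "\<forall>v\<in>V - (W - {v0}). \<forall>N. N \<subseteq> F \<longrightarrow> goodv ends d k b v (M \<union> N)"
    proof (intro ballI allI impI)
      fix v N assume v: "v \<in> V - (W - {v0})" and N: "N \<subseteq> F"
      show "goodv ends d k b v (M \<union> N)"
      proof (cases "v = v0")
        case True then show ?thesis using g0 N by simp
      next
        case False then show ?thesis using gd v N by auto
      qed
    qed
    show ?thesis unfolding s' irp_inv_def using WV FE ME FM iM indd bW g3 by auto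
  qed
qed

lemma inv_final:
  assumes I: "irp_inv V E ends k b d indep (W, {}, indep', b', M')"
  shows "indep M' \<and>
    (\<forall>v\<in>V. \<forall>L. L \<subseteq> hdelta ends M' v \<and> card L = min k (card (hdelta ends M' v)) \<and>
                (\<forall>e\<in>L. \<forall>e'\<in>hdelta ends M' v - L. d v e' \<le> d v e)
             \<longrightarrow> (\<Sum>e\<in>hdelta ends M' v - L. d v e) \<le> b v)"
proof -
  have WV: "W \<subseteq> V" and ME: "M' \<subseteq> E" and iM: "indep M'"
    and bW: "\<forall>v\<in>W. b' v = b v - (\<Sum>e\<in>hdelta ends M' v. d v e) \<and> 0 \<le> b' v"
    and gd: "\<forall>v\<in>V - W. \<forall>N. N \<subseteq> {} \<longrightarrow> goodv ends d k b v (M' \<union> N)"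
  proof -
    have H: "W \<subseteq> V \<and> {} \<subseteq> E \<and> M' \<subseteq> E \<and> {} \<inter> M' = {} \<and> indep M' \<and>
     indep' = (\<lambda>I. I \<subseteq> {} \<and> indep (I \<union> M')) \<and>
     (\<forall>v\<in>W. b' v = b v - (\<Sum>e\<in>hdelta ends M' v. d v e) \<and> 0 \<le> b' v) \<and>
     (\<forall>v\<in>V - W. \<forall>N. N \<subseteq> {} \<longrightarrow> goodv ends d k b v (M' \<union> N))"
      using I unfolding irp_inv_def prod.case .
    then show "W \<subseteq> V" "M' \<subseteq> E" "indep M'"
      "\<forall>v\<in>W. b' v = b v - (\<Sum>e\<in>hdelta ends M' v. d v e) \<and> 0 \<le> b' v"
      "\<forall>v\<in>V - W. \<forall>N. N \<subseteq> {} \<longrightarrow> goodv ends d k b v (M' \<union> N)" by blast+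
  qed
  have fM: "finite M'" using finite_subset[OF ME fE] .
  have g: "goodv ends d k b v M'" if v: "v \<in> V" for v
  proof (cases "v \<in> W")
    case False
    then show ?thesis using gd v by auto
  next
    case True
    show ?thesis unfolding goodv_def
    proof (intro allI impI, elim conjE)
      fix L assume L: "L \<subseteq> hdelta ends M' v"
      have fh: "finite (hdelta ends M' v)" unfolding hdelta_def using fM by simp
      have "(\<Sum>e\<in>hdelta ends M' v - L. d v e) \<le> (\<Sum>e\<in>hdelta ends M' v. d v e)"
      proof (intro sum_mono2[OF fh])
        show "hdelta ends M' v - L \<subseteq> hdelta ends M' v" by blast
      next
        fix e assume "e \<in> hdelta ends M' v - (hdelta ends M' v - L)"
        then have "e \<in> E" "v \<in> ends e" unfolding hdelta_def using ME by auto
        then show "0 \<le> d v e" using dnn by blast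
      qed
      then show "(\<Sum>e\<in>hdelta ends M' v - L. d v e) \<le> b v" using bW True by force
    qed
  qed
  show ?thesis using iM g unfolding goodv_def by blast
qed

end


theorem lemma3:
  fixes V :: "'v set" and E :: "'e set" and ends :: "'e \<Rightarrow> 'v set" and k :: nat
    and b :: "'v \<Rightarrow> real" and d :: "'v \<Rightarrow> 'e \<Rightarrow> real" and p :: "'e \<Rightarrow> real"
    and indep :: "'e set \<Rightarrow> bool"
    and W :: "'v set" and indep' :: "'e set \<Rightarrow> bool" and b' :: "'v \<Rightarrow> real" and M' :: "'e set"
  assumes "finite V" and "finite E"
    and "\<forall>e\<in>E. ends e \<subseteq> V \<and> card (ends e) \<le> k"
    and "\<forall>v\<in>V. 0 \<le> b v"
    and "\<forall>e\<in>E. \<forall>v\<in>ends e. 0 \<le> d v e"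
    and "\<forall>e\<in>E. 0 \<le> p e"
    and "matroid E indep"
    and "(irp_step ends d p)\<^sup>*\<^sup>* (V, E, indep, b, {}) (W, {}, indep', b', M')"
  shows "indep M' \<and>
    (\<forall>v\<in>V. \<forall>L. L \<subseteq> hdelta ends M' v \<and> card L = min k (card (hdelta ends M' v)) \<and>
                (\<forall>e\<in>L. \<forall>e'\<in>hdelta ends M' v - L. d v e' \<le> d v e)
             \<longrightarrow> (\<Sum>e\<in>hdelta ends M' v - L. d v e) \<le> b v)"
  proof -
  have "irp_inv V E ends k b d indep s"
    if "(irp_step ends d p)\<^sup>*\<^sup>* (V, E, indep, b, {}) s" for s
    using that
  proof (induction rule: rtranclp_induct)
    case base
    then show ?case using inv_init[OF assms(1-5,7)] .
  next
    case (step y z)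
    then show ?case using inv_step[OF assms(1-5,7)] by blast
  qed
  then have "irp_inv V E ends k b d indep (W, {}, indep', b', M')" using assms(8) .
  then show ?thesis using inv_final[OF assms(1-5,7)] by blast
qed

end
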